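(* Let $(L_1,\preceq_1,\bot_1,\top_1)$ and $(L_2,\preceq_2,\bot_2,\top_2)$ be complete lattices, $(P,\leq)$ a poset, and $(\&_i,\swarrow^i,\nwarrow_i)$, $i=1,\dots,n$, adjoint triples with respect to $L_1,L_2,P$. Let $(A,B,R,\sigma)$ be a context over this frame. Then for every $a\in A$, $b\in B$, $x\in L_1$ and $y\in L_2$, $$\langle \phi_{b,y}^{\uparrow\downarrow},\phi_{b,y}^{\uparrow}\rangle \preceq \langle \phi_{a,x}^{\downarrow},\phi_{a,x}^{\downarrow\uparrow}\rangle \quad\text{if and only if}\quad x\,\&_{\sigma(a,b)}\, y\leq R(a,b).$$
   Context: An adjoint triple with respect to posets $P_1,P_2,P_3$ is a triple of maps $\&\colon P_1\times P_2\to P_3$, $\swarrow\colon P_3\times P_2\to P_1$, $\nwarrow\colon P_3\times P_1\to P_2$ such that $x\le_1 z\swarrow y \iff x\& y\le_3 z\iff y\le_2 z\nwarrow x$ for all $x\in P_1,y\in P_2,z\in P_3$. A context is a tuple $(A,B,R,\sigma)$ with $A,B$ non-empty sets, $R\colon A\times B\to P$ and $\sigma\colon A\times B\to\{1,\dots,n\}$. For $g\colon B\to L_2$ and $f\colon A\to L_1$ define $g^\uparrow(a)=\inf\{R(a,b)\swarrow^{\sigma(a,b)} g(b)\mid b\in B\}$ and $f^\downarrow(b)=\inf\{R(a,b)\nwarrow_{\sigma(a,b)} f(a)\mid a\in A\}$. A concept is a pair $\langle g,f\rangle$ with $g^\uparrow=f$ and $f^\downarrow=g$; concepts are ordered by $\langle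 g_1,f_1\rangle\preceq\langle g_2,f_2\rangle$ iff $g_1\le g_2$ pointwise. For $a\in A$, $x\in L_1$, the fuzzy-attribute $\phi_{a,x}\colon A\to L_1$ takes value $x$ at $a$ and $\bot_1$ elsewhere; for $b\in B$, $y\in L_2$, the fuzzy-object $\phi_{b,y}\colon B\to L_2$ takes value $y$ at $b$ and $\bot_2$ elsewhere. *)

theory Defs
  imports Main
begin

definition adjoint_triple ::
  "('l1::order \<Rightarrow> 'l2::order \<Rightarrow> 'p::order) \<Rightarrow> ('p \<Rightarrow> 'l2 \<Rightarrow> 'l1) \<Rightarrow> ('p \<Rightarrow> 'l1 \<Rightarrow> 'l2) \<Rightarrow> bool" where
  "adjoint_triple tn ls rs \<longleftrightarrow>
     (\<forall>x y z. (x \<le> ls z y \<longleftrightarrow> tn x y \<le> z) \<and> (tn x y \<le> z \<longleftrightarrow> y \<le> rs z x))"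

definition is_context :: "nat \<Rightarrow> 'a set \<Rightarrow> 'b set \<Rightarrow> ('a \<Rightarrow> 'b \<Rightarrow> 'p) \<Rightarrow> ('a \<Rightarrow> 'b \<Rightarrow> nat) \<Rightarrow> bool" where
  "is_context n A B R \<sigma> \<longleftrightarrow> A \<noteq> {} \<and> B \<noteq> {} \<and> (\<forall>a\<in>A. \<forall>b\<in>B. \<sigma> a b \<in> {1..n})"

text \<open>Derivation operators; ls i = \<swarrow>^i, rs i = \<nwarrow>_i.\<close>
definition up_op :: "'a set \<Rightarrow> 'b set \<Rightarrow> ('a \<Rightarrow> 'b \<Rightarrow> 'p) \<Rightarrow> ('a \<Rightarrow> 'b \<Rightarrow> nat)
    \<Rightarrow> (nat \<Rightarrow> 'p \<Rightarrow> 'l2 \<Rightarrow> 'l1::complete_lattice) \<Rightarrow> ('b \<Rightarrow> 'l2) \<Rightarrow> ('a \<Rightarrow> 'l1)" where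
  "up_op A B R \<sigma> ls g = (\<lambda>a. Inf {ls (\<sigma> a b) (R a b) (g b) | b. b \<in> B})"

definition down_op :: "'a set \<Rightarrow> 'b set \<Rightarrow> ('a \<Rightarrow> 'b \<Rightarrow> 'p) \<Rightarrow> ('a \<Rightarrow> 'b \<Rightarrow> nat)
    \<Rightarrow> (nat \<Rightarrow> 'p \<Rightarrow> 'l1 \<Rightarrow> 'l2::complete_lattice) \<Rightarrow> ('a \<Rightarrow> 'l1) \<Rightarrow> ('b \<Rightarrow> 'l2)" where
  "down_op A B R \<sigma> rs f = (\<lambda>b. Inf {rs (\<sigma> a b) (R a b) (f a) | a. a \<in> A})"

definition phi :: "'c \<Rightarrow> 'l::complete_lattice \<Rightarrow> 'c \<Rightarrow> 'l" where
  "phi c v = (\<lambda>c'. if c' = c then v else bot)"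

text \<open>Concepts: functions compared on the carriers A and B only.\<close>
definition is_concept :: "'a set \<Rightarrow> 'b set \<Rightarrow> ('a \<Rightarrow> 'b \<Rightarrow> 'p) \<Rightarrow> ('a \<Rightarrow> 'b \<Rightarrow> nat)
    \<Rightarrow> (nat \<Rightarrow> 'p \<Rightarrow> 'l2 \<Rightarrow> 'l1::complete_lattice) \<Rightarrow> (nat \<Rightarrow> 'p \<Rightarrow> 'l1 \<Rightarrow> 'l2::complete_lattice)
    \<Rightarrow> ('b \<Rightarrow> 'l2) \<Rightarrow> ('a \<Rightarrow> 'l1) \<Rightarrow> bool" where
  "is_concept A B R \<sigma> ls rs g f \<longleftrightarrow>
     (\<forall>a\<in>A. up_op A B R \<sigma> ls g a = f a) \<and> (\<forall>b\<in>B. down_op A B R \<sigma> rs f b = g b)"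

definition concept_le :: "'b set \<Rightarrow> ('b \<Rightarrow> 'l2::order) \<times> ('a \<Rightarrow> 'l1) \<Rightarrow> ('b \<Rightarrow> 'l2) \<times> ('a \<Rightarrow> 'l1) \<Rightarrow> bool" where
  "concept_le B C1 C2 \<longleftrightarrow> (\<forall>b\<in>B. fst C1 b \<le> fst C2 b)"

end

theory Submission
  imports Defs
begin

theorem corollary14:
  fixes n :: nat
    and tn :: "nat \<Rightarrow> 'l1::complete_lattice \<Rightarrow> 'l2::complete_lattice \<Rightarrow> 'p::order"
    and ls :: "nat \<Rightarrow> 'p \<Rightarrow> 'l2 \<Rightarrow> 'l1"
    and rs :: "nat \<Rightarrow> 'p \<Rightarrow> 'l1 \<Rightarrow> 'l2"
    and A :: "'a set" and B :: "'b set"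
    and R :: "'a \<Rightarrow> 'b \<Rightarrow> 'p" and \<sigma> :: "'a \<Rightarrow> 'b \<Rightarrow> nat"
    and a :: 'a and b :: 'b and x :: 'l1 and y :: 'l2
  assumes adj: "\<And>i. i \<in> {1..n} \<Longrightarrow> adjoint_triple (tn i) (ls i) (rs i)"
    and ctx: "is_context n A B R \<sigma>"
    and aA: "a \<in> A" and bB: "b \<in> B"
  shows "concept_le B
           (down_op A B R \<sigma> rs (up_op A B R \<sigma> ls (phi b y)), up_op A B R \<sigma> ls (phi b y))
           (down_op A B R \<sigma> rs (phi a x), up_op A B R \<sigma> ls (down_op A B R \<sigma> rs (phi a x)))
         \<longleftrightarrow> tn (\<sigma> a b) x y \<le> R a b"
proof -
  have sig: "\<And>a' b'. a' \<in> A \<Longrightarrow> b' \<in> B \<Longrightarrow> \<sigma> a' b' \<in> {1..n}"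
    using ctx unfolding is_context_def by blast
  have gal: "\<And>a' b' u v. a' \<in> A \<Longrightarrow> b' \<in> B \<Longrightarrow>
      (u \<le> ls (\<sigma> a' b') (R a' b') v) = (v \<le> rs (\<sigma> a' b') (R a' b') u)"
    using adj sig unfolding adjoint_triple_def by blast
  have gal2: "\<And>a' b' u v. a' \<in> A \<Longrightarrow> b' \<in> B \<Longrightarrow>
      (tn (\<sigma> a' b') u v \<le> R a' b') = (v \<le> rs (\<sigma> a' b') (R a' b') u)"
    using adj sig unfolding adjoint_triple_def by blast
  define g where "g = phi b y"
  define f where "f = phi a x"
  have ext: "\<And>b'. b' \<in> B \<Longrightarrow> g b' \<le> down_op A B R \<sigma> rs (up_op A B R \<sigma> ls g) b'"
  proof -
    fix b' assume b': "b' \<in> B"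
    show "g b' \<le> down_op A B R \<sigma> rs (up_op A B R \<sigma> ls g) b'"
      unfolding down_op_def
    proof (rule Inf_greatest, clarify)
      fix a' assume a': "a' \<in> A"
      have "up_op A B R \<sigma> ls g a' \<le> ls (\<sigma> a' b') (R a' b') (g b')"
        unfolding up_op_def by (rule Inf_lower) (use b' in blast)
      then show "g b' \<le> rs (\<sigma> a' b') (R a' b') (up_op A B R \<sigma> ls g a')"
        using gal[OF a' b'] by blast
    qed
  qed
  have anti: "\<And>b'. b' \<in> B \<Longrightarrow> (\<forall>a'\<in>A. f a' \<le> up_op A B R \<sigma> ls g a') \<Longrightarrow>
      down_op A B R \<sigma> rs (up_op A B R \<sigma> ls g) b' \<le> down_op A B R \<sigma> rs f b'"
  proof -
    fix b' assume b': "b' \<in> B" and le: "\<forall>a'\<in>A. f a' \<le> up_op A B R \<sigma> ls g a'"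
    show "down_op A B R \<sigma> rs (up_op A B R \<sigma> ls g) b' \<le> down_op A B R \<sigma> rs f b'"
      unfolding down_op_def[of A B R \<sigma> rs f]
    proof (rule Inf_greatest, clarify)
      fix a' assume a': "a' \<in> A"
      have "down_op A B R \<sigma> rs (up_op A B R \<sigma> ls g) b'
          \<le> rs (\<sigma> a' b') (R a' b') (up_op A B R \<sigma> ls g a')"
        unfolding down_op_def by (rule Inf_lower) (use a' in blast)
      then have "up_op A B R \<sigma> ls g a' \<le> ls (\<sigma> a' b') (R a' b') (down_op A B R \<sigma> rs (up_op A B R \<sigma> ls g) b')"
        using gal[OF a' b'] by blast
      then have "f a' \<le> ls (\<sigma> a' b') (R a' b') (down_op A B R \<sigma> rs (up_op A B R \<sigma> ls g) b')"
        using le a' by (meson order_trans)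
      then show "down_op A B R \<sigma> rs (up_op A B R \<sigma> ls g) b' \<le> rs (\<sigma> a' b') (R a' b') (f a')"
        using gal[OF a' b'] by blast
    qed
  qed
  show ?thesis
    unfolding concept_le_def fst_conv g_def[symmetric] f_def[symmetric]
  proof
    assume H: "\<forall>b'\<in>B. down_op A B R \<sigma> rs (up_op A B R \<sigma> ls g) b' \<le> down_op A B R \<sigma> rs f b'"
    have "g b \<le> down_op A B R \<sigma> rs f b"
      using ext[OF bB] H bB by (meson order_trans)
    then have "y \<le> down_op A B R \<sigma> rs f b" unfolding g_def phi_def by simp
    also have "\<dots> \<le> rs (\<sigma> a b) (R a b) (f a)"
      unfolding down_op_def by (rule Inf_lower) (use aA in blast)
    finally show "tn (\<sigma> a b) x y \<le> R a b"
      using gal2[OF aA bB] unfolding f_def phi_def by simp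
  next
    assume T: "tn (\<sigma> a b) x y \<le> R a b"
    have "\<forall>a'\<in>A. f a' \<le> up_op A B R \<sigma> ls g a'"
    proof
      fix a' assume a': "a' \<in> A"
      show "f a' \<le> up_op A B R \<sigma> ls g a'"
      proof (cases "a' = a")
        case False then show ?thesis unfolding f_def phi_def by simp
      next
        case True
        show ?thesis unfolding up_op_def
        proof (rule Inf_greatest, clarify)
          fix b' assume b': "b' \<in> B"
          show "f a' \<le> ls (\<sigma> a' b') (R a' b') (g b')"
          proof (cases "b' = b")
            case True
            then show ?thesis using T gal[OF a' b'] gal2[OF a' b'] \<open>a' = a\<close>
              unfolding f_def g_def phi_def by simp
          next
            case False
            then show ?thesis using gal[OF a' b'] unfolding g_def phi_def by simp
          qed
        qed
      qed
    qed
    then show "\<forall>b'\<in>B. down_op A B R \<sigma> rs (up_op A B R \<sigma> ls g) b' \<le> down_op A B R \<sigma> rs f b'"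
      using anti by blast
  qed
qed

end
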